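(* Assume $X\in\mathbb R^{n\times p}$ ($p>n$) has rank $n$, let $X=UDV^\top$ be its SVD, and define $\tilde{\mathbf y}=D^\dagger U^\top\mathbf y$, $\tilde w=V^\top w$. Then the solution $\hat\theta$ of $\min_\theta\|\theta\|^{3/2}-w^\top\theta$ subject to $\mathbf y=X\theta$ satisfies $$\hat\theta=\hat\theta_{\mathsf{OLS}}+\alpha^\star\,(I-X^\top(XX^\top)^{-1}X)\,w,\qquad \hat\theta_{\mathsf{OLS}}=X^\top(XX^\top)^{-1}\mathbf y,$$ where $$\alpha^\star=\sqrt{\frac{8\|\tilde w_{n+1:p}\|^2+\sqrt{64\|\tilde w_{n+1:p}\|^4+1296\|\tilde{\mathbf y}\|^2}}{81}}.$$
   Context: $w\in\mathbb R^p$ is any fixed vector (in the paper $w=\theta(0)/\sqrt{\|\theta(0)\|}$), $\mathbf y\in\mathbb R^n$. $X=UDV^\top$ with $U\in\mathbb R^{n\times n}$, $V\in\mathbb R^{p\times p}$ orthogonal and $D\in\mathbb R^{n\times p}$ rectangular diagonal with singular values in descending order; $D^\dagger\in\mathbb R^{p\times n}$ its pseudo-inverse. For $v\in\mathbb R^p$, $v_{n+1:p}$ denotes $v$ with its first $n$ coordinates set to zero. *)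

theory Defs
  imports "Jordan_Normal_Form.DL_Rank" "Jordan_Normal_Form.Gauss_Jordan_Elimination"
begin

definition vnorm :: "real vec \<Rightarrow> real" where
  "vnorm v = sqrt (v \<bullet> v)"

(* v_{n+1:p}: v with its first n coordinates set to zero *)
definition tail_vec :: "nat \<Rightarrow> real vec \<Rightarrow> real vec" where
  "tail_vec n v = vec (dim_vec v) (\<lambda>i. if i < n then 0 else v $ i)"

definition rect_diag_desc :: "real mat \<Rightarrow> bool" where
  "rect_diag_desc D \<longleftrightarrow>
     (\<forall>i<dim_row D. \<forall>j<dim_col D. i \<noteq> j \<longrightarrow> D $$ (i,j) = 0) \<and>
     (\<forall>i<min (dim_row D) (dim_col D). D $$ (i,i) \<ge> 0) \<and>
     (\<forall>i j. i \<le> j \<longrightarrow> j < min (dim_row D) (dim_col D) \<longrightarrow> D $$ (j,j) \<le> D $$ (i,i))"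

(* Moore-Penrose pseudo-inverse of a rectangular diagonal matrix
   (note inverse 0 = 0 in Isabelle) *)
definition diag_pinv :: "real mat \<Rightarrow> real mat" where
  "diag_pinv D = mat (dim_col D) (dim_row D)
      (\<lambda>(i,j). if i = j then inverse (D $$ (j,i)) else 0)"

definition orthonormal_mat :: "nat \<Rightarrow> real mat \<Rightarrow> bool" where
  "orthonormal_mat m Q \<longleftrightarrow> Q \<in> carrier_mat m m \<and>
      transpose_mat Q * Q = 1\<^sub>m m \<and> Q * transpose_mat Q = 1\<^sub>m m"

definition objective :: "real vec \<Rightarrow> real vec \<Rightarrow> real" where
  "objective w \<theta> = vnorm \<theta> powr (3/2) - w \<bullet> \<theta>"

definition is_solution :: "real mat \<Rightarrow> real vec \<Rightarrow> real vec \<Rightarrow> real vec \<Rightarrow> bool" where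
  "is_solution X y w \<theta> \<longleftrightarrow> \<theta> \<in> carrier_vec (dim_col X) \<and> X *\<^sub>v \<theta> = y \<and>
     (\<forall>\<theta>'\<in>carrier_vec (dim_col X). X *\<^sub>v \<theta>' = y \<longrightarrow> objective w \<theta> \<le> objective w \<theta>')"

end

theory Submission imports Defs begin


lemma sp_self_ge0: "(v::real vec) \<bullet> v \<ge> 0"
  unfolding scalar_prod_def by (auto intro!: sum_nonneg)

lemma sp_self_0: assumes "v \<in> carrier_vec p" "(v::real vec) \<bullet> v = 0" shows "v = 0\<^sub>v p"
proof (rule eq_vecI)
  have "\<forall>i\<in>{0..<dim_vec v}. v $ i * v $ i = 0"
    using assms(2) unfolding scalar_prod_def by (subst sum_nonneg_eq_0_iff[symmetric]) auto
  then show "\<And>i. i < dim_vec (0\<^sub>v p) \<Longrightarrow> v $ i = 0\<^sub>v p $ i" using assms(1) by auto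
qed (use assms in auto)

lemma vnorm_sq: "vnorm v ^ 2 = v \<bullet> v"
  unfolding vnorm_def by (rule real_sqrt_pow2[OF sp_self_ge0])

lemma vnorm_ge0: "vnorm v \<ge> 0" unfolding vnorm_def using sp_self_ge0[of v] by simp

lemma CS: assumes x: "x \<in> carrier_vec p" and y: "y \<in> carrier_vec p"
  shows "(x::real vec) \<bullet> y \<le> vnorm x * vnorm y"
proof -
  define s where "s = vnorm y"
  define t where "t = vnorm x"
  have s0: "s \<ge> 0" "t \<ge> 0" unfolding s_def t_def by (auto simp: vnorm_ge0)
  have xx: "(\<Sum>i<p. x$i * x$i) = t^2" using x unfolding t_def vnorm_sq scalar_prod_def
    by (simp add: atLeast0LessThan)
  have yy: "(\<Sum>i<p. y$i * y$i) = s^2" using y unfolding s_def vnorm_sq scalar_prod_def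
    by (simp add: atLeast0LessThan)
  have xy: "(\<Sum>i<p. x$i * y$i) = x \<bullet> y" using y unfolding scalar_prod_def
    by (simp add: atLeast0LessThan)
  have "0 \<le> (\<Sum>i<p. (s * x$i - t * y$i)^2)" by (intro sum_nonneg) auto
  also have "\<dots> = s^2 * (\<Sum>i<p. x$i * x$i) - 2*s*t * (\<Sum>i<p. x$i * y$i) + t^2 * (\<Sum>i<p. y$i * y$i)"
    by (simp add: power2_eq_square algebra_simps sum.distrib sum_subtractf sum_distrib_left)
  finally have q: "0 \<le> 2*s^2*t^2 - 2*s*t*(x \<bullet> y)" unfolding xx yy xy by (simp add: algebra_simps power2_eq_square)
  show ?thesis
  proof (cases "s * t > 0")
    case True
    from q have "s*t*(x \<bullet> y) \<le> (s*t)*(s*t)" by (simp add: power2_eq_square algebra_simps)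
    then have "x \<bullet> y \<le> s*t" using True by (simp add: mult_le_cancel_left)
    then show ?thesis unfolding s_def t_def by (simp add: mult.commute)
  next
    case False
    then have "s = 0 \<or> t = 0" using s0 by (auto simp: zero_less_mult_iff less_le)
    then have "x = 0\<^sub>v p \<or> y = 0\<^sub>v p" using sp_self_0[OF x] sp_self_0[OF y] vnorm_sq
      unfolding s_def t_def by (metis power_zero_numeral)
    then show ?thesis using x y by (auto simp: vnorm_ge0)
  qed
qed

lemma powr32: "(x::real) \<ge> 0 \<Longrightarrow> x powr (3/2) = sqrt x ^ 3"
proof -
  assume x: "x \<ge> 0"
  show ?thesis
  proof (cases "x = 0")
    case False
    then have "x powr (3/2) = x powr (1 + 1/2)" by simp
    also have "\<dots> = x powr 1 * x powr (1/2)" by (rule powr_add)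
    also have "\<dots> = x * sqrt x" using False x by (simp add: powr_half_sqrt)
    also have "\<dots> = sqrt x ^ 3" using x by (simp add: power3_eq_cube)
    finally show ?thesis .
  qed simp
qed

lemma key_scalar: fixes m r c :: real
  assumes r: "r > 0" and m: "m \<ge> 0" and c: "c \<le> r^2 * m^2"
  shows "m^3 - r^3 - 3/(2*r) * (c - r^4) = (m - r)^2 * (m + r/2) + 3/(2*r) * (r^2*m^2 - c)"
    and "m^3 - r^3 - 3/(2*r) * (c - r^4) \<ge> 0"
    and "m^3 - r^3 - 3/(2*r) * (c - r^4) \<le> 0 \<Longrightarrow> m = r \<and> c = r^2 * m^2"
proof -
  show e: "m^3 - r^3 - 3/(2*r) * (c - r^4) = (m - r)^2 * (m + r/2) + 3/(2*r) * (r^2*m^2 - c)"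
    using r by (simp add: field_simps power2_eq_square power3_eq_cube) (simp add: algebra_simps power4_eq_xxxx)
  have a: "(m - r)^2 * (m + r/2) \<ge> 0" using r m by simp
  have b: "3/(2*r) * (r^2*m^2 - c) \<ge> 0" using r c by simp
  show "m^3 - r^3 - 3/(2*r) * (c - r^4) \<ge> 0" using a b e by linarith
  assume "m^3 - r^3 - 3/(2*r) * (c - r^4) \<le> 0"
  then have "(m - r)^2 * (m + r/2) = 0" "3/(2*r) * (r^2*m^2 - c) = 0" using a b e by linarith+
  then show "m = r \<and> c = r^2 * m^2" using r m by auto
qed



lemma core:
  fixes X :: "real mat" and y w t0 u :: "real vec"
  assumes X: "X \<in> carrier_mat n p" and t0: "t0 \<in> carrier_vec p" and u: "u \<in> carrier_vec p"
    and w: "w \<in> carrier_vec p"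
    and Xt0: "X *\<^sub>v t0 = y" and Xu: "X *\<^sub>v u = 0\<^sub>v n"
    and orth: "\<And>z. z \<in> carrier_vec p \<Longrightarrow> X *\<^sub>v z = 0\<^sub>v n \<Longrightarrow> t0 \<bullet> z = 0 \<and> w \<bullet> z = u \<bullet> z"
    and ha: "a = vnorm u" and hb: "b = vnorm t0"
    and hal: "alpha = sqrt ((8 * a ^ 2 + sqrt (64 * a ^ 4 + 1296 * b ^ 2)) / 81)"
  shows "is_solution X y w (t0 + alpha \<cdot>\<^sub>v u) \<and> (\<forall>\<theta>. is_solution X y w \<theta> \<longrightarrow> \<theta> = t0 + alpha \<cdot>\<^sub>v u)"
proof -
  define th where "th = t0 + alpha \<cdot>\<^sub>v u"
  have th: "th \<in> carrier_vec p" unfolding th_def using t0 u by simp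
  have y: "y \<in> carrier_vec n" using Xt0 X t0 by auto
  have Xth: "X *\<^sub>v th = y"
    unfolding th_def using X t0 u Xt0 Xu y
    apply (simp add: mult_add_distrib_mat_vec[OF X t0] mult_mat_vec[OF X u])
    by (rule eq_vecI) auto
  have t0u: "t0 \<bullet> u = 0" using orth[OF u Xu] by simp
  have a0: "a \<ge> 0" and b0: "b \<ge> 0" using ha hb vnorm_ge0 by auto
  define S where "S = sqrt (64 * a ^ 4 + 1296 * b ^ 2)"
  have S0: "S \<ge> 0" unfolding S_def by simp
  have S2: "S^2 = 64 * a ^ 4 + 1296 * b ^ 2" unfolding S_def by simp
  have al0: "alpha \<ge> 0" unfolding hal by simp
  have A: "alpha^2 = (8 * a^2 + S)/81" unfolding hal S_def by (simp add: S0[unfolded S_def])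
  have "81 * alpha^2 - 8*a^2 = S" using A by simp
  then have "(81 * alpha^2 - 8*a^2)^2 = 64 * a ^ 4 + 1296 * b ^ 2" using S2 by simp
  then have quad: "81/16 * alpha^4 = b^2 + alpha^2 * a^2"
    by (simp add: power2_eq_square power4_eq_xxxx algebra_simps) 
  have uu: "u \<bullet> u = a^2" using ha vnorm_sq by simp
  have tt: "t0 \<bullet> t0 = b^2" using hb vnorm_sq by simp
  have thth: "th \<bullet> th = b^2 + alpha^2 * a^2"
  proof -
    have "th \<bullet> th = t0 \<bullet> t0 + 2 * alpha * (t0 \<bullet> u) + alpha^2 * (u \<bullet> u)"
      unfolding th_def using t0 u
      by (simp add: add_scalar_prod_distrib[of _ p] scalar_prod_add_distrib[of _ p]
          comm_scalar_prod[of u p t0] power2_eq_square algebra_simps)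
    then show ?thesis using uu tt t0u by simp
  qed
  have main: "objective w th \<le> objective w \<theta> \<and> (objective w \<theta> \<le> objective w th \<longrightarrow> \<theta> = th)"
    if T: "\<theta> \<in> carrier_vec p" and XT: "X *\<^sub>v \<theta> = y" for \<theta>
  proof -
    define z where "z = \<theta> - th"
    have z: "z \<in> carrier_vec p" unfolding z_def using T th by simp
    have Xz: "X *\<^sub>v z = 0\<^sub>v n" unfolding z_def
      using mult_minus_distrib_mat_vec[OF X T th] XT Xth y by simp
    have Tz: "\<theta> = th + z" unfolding z_def using T th by (intro eq_vecI) auto
    from orth[OF z Xz] have t0z: "t0 \<bullet> z = 0" and wz: "w \<bullet> z = u \<bullet> z" by auto
    have thz: "th \<bullet> z = alpha * (u \<bullet> z)"
      unfolding th_def using t0 u z t0z by (simp add: add_scalar_prod_distrib[of _ p])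
    have wT: "w \<bullet> \<theta> = w \<bullet> th + u \<bullet> z"
      unfolding Tz using w th z wz by (simp add: scalar_prod_add_distrib[of _ p])
    have thT: "th \<bullet> \<theta> = th \<bullet> th + th \<bullet> z"
      unfolding Tz using th z by (simp add: scalar_prod_add_distrib[of _ p])
    have TT: "\<theta> \<bullet> \<theta> = th \<bullet> th + 2 * (th \<bullet> z) + z \<bullet> z"
      unfolding Tz using th z by (simp add: scalar_prod_add_distrib[of _ p] add_scalar_prod_distrib[of _ p]
          comm_scalar_prod[of z p th])
    define N where "N = vnorm \<theta>"
    define R where "R = vnorm th"
    have N0: "N \<ge> 0" and R0: "R \<ge> 0" unfolding N_def R_def using vnorm_ge0 by auto
    have diff: "objective w \<theta> - objective w th = sqrt N ^ 3 - sqrt R ^ 3 - u \<bullet> z"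
      unfolding objective_def N_def[symmetric] R_def[symmetric] wT
      using powr32[OF N0] powr32[OF R0] by simp
    show ?thesis
    proof (cases "alpha = 0")
      case True
      then have "8 * a^2 + S = 0" using A by simp
      then have "a = 0" "S = 0" using S0 by (auto simp: add_nonneg_eq_0_iff)
      then have "b = 0" using S2 b0 by simp
      have u0: "u = 0\<^sub>v p" using sp_self_0[OF u] uu \<open>a = 0\<close> by simp
      have th0: "th = 0\<^sub>v p" using sp_self_0[OF th] thth \<open>a = 0\<close> \<open>b = 0\<close> by simp
      have "R = 0" unfolding R_def vnorm_def th0 by simp
      have uz: "u \<bullet> z = 0" using u0 z by simp
      have d: "objective w \<theta> - objective w th = sqrt N ^ 3" using diff \<open>R = 0\<close> uz by simp
      show ?thesis
      proof
        have "sqrt N ^ 3 \<ge> 0" using N0 by simp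
        then show "objective w th \<le> objective w \<theta>" using d by linarith
        show "objective w \<theta> \<le> objective w th \<longrightarrow> \<theta> = th"
        proof
          assume "objective w \<theta> \<le> objective w th"
          then have "sqrt N ^ 3 \<le> 0" using d by linarith
          moreover have "sqrt N ^ 3 \<ge> 0" using N0 by simp
          ultimately have "sqrt N ^ 3 = 0" by linarith
          then have "N = 0" by simp
          then have "\<theta> \<bullet> \<theta> = 0" using vnorm_sq[of \<theta>] unfolding N_def by simp
          then show "\<theta> = th" using sp_self_0[OF T] th0 by simp
        qed
      qed
    next
      case False
      then have alp: "alpha > 0" using al0 by simp
      have RR: "R^2 = (9/4 * alpha^2)^2" using thth quad vnorm_sq[of th] unfolding R_def
        by (simp add: power2_eq_square power4_eq_xxxx algebra_simps)
      then have R: "R = 9/4 * alpha^2" using R0 by (simp add: power2_eq_iff_nonneg)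
      define r where "r = sqrt R"
      have "R = (3/2 * alpha)^2" using R by (simp add: power2_eq_square)
      then have r: "r = 3/2 * alpha" unfolding r_def using alp by simp
      have rpos: "r > 0" using r alp by simp
      define m where "m = sqrt N"
      have m0: "m \<ge> 0" unfolding m_def using N0 by simp
      define c where "c = th \<bullet> \<theta>"
      have Rr: "R = r^2" unfolding r_def using R0 by simp
      have Nm: "N = m^2" unfolding m_def using N0 by simp
      have cle: "c \<le> r^2 * m^2" unfolding c_def using CS[OF th T] unfolding R_def[symmetric] N_def[symmetric] Rr Nm .
      have thth4: "th \<bullet> th = r^4" using vnorm_sq[of th] unfolding R_def[symmetric] Rr
        by (simp add: power4_eq_xxxx power2_eq_square)
      have cc: "c = r^4 + alpha * (u \<bullet> z)" unfolding c_def thT thth4 thz ..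
      have ia: "1/alpha = 3/(2*r)" using r alp by (simp add: field_simps)
      have uz: "u \<bullet> z = 3/(2*r) * (c - r^4)"
      proof -
        have "u \<bullet> z = (c - r^4) * (1/alpha)" using cc alp by (simp add: field_simps)
        then show ?thesis unfolding ia by simp
      qed
      have d: "objective w \<theta> - objective w th = m^3 - r^3 - 3/(2*r) * (c - r^4)"
        unfolding diff m_def[symmetric] r_def[symmetric] uz ..
      note K = key_scalar[OF rpos m0 cle]
      show ?thesis
      proof
        show "objective w th \<le> objective w \<theta>" using d K(2) by linarith
        show "objective w \<theta> \<le> objective w th \<longrightarrow> \<theta> = th"
        proof
          assume "objective w \<theta> \<le> objective w th"
          then have "m = r \<and> c = r^2 * m^2" using d K(3) by linarith
          then have mr: "m = r" and cm: "c = r^2 * m^2" by auto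
          have "N = R" using mr Nm Rr by simp
          have "c = R^2" using cm mr Rr by (simp add: power2_eq_square)
          have "th \<bullet> th = R^2" using vnorm_sq[of th] unfolding R_def by simp
          then have "th \<bullet> z = 0" using thT \<open>c = R^2\<close> unfolding c_def by simp
          moreover have "\<theta> \<bullet> \<theta> = th \<bullet> th" using \<open>N = R\<close> vnorm_sq[of \<theta>] vnorm_sq[of th]
            unfolding N_def R_def by simp
          ultimately have "z \<bullet> z = 0" using TT by simp
          then have "z = 0\<^sub>v p" using sp_self_0[OF z] by simp
          then show "\<theta> = th" using Tz th by simp
        qed
      qed
    qed
  qed
  have sol: "is_solution X y w th" unfolding is_solution_def
  proof (intro conjI ballI impI)
    show "th \<in> carrier_vec (dim_col X)" using th X by simp
    show "X *\<^sub>v th = y" by (rule Xth)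
    fix \<theta>' assume a1: "\<theta>' \<in> carrier_vec (dim_col X)" and a2: "X *\<^sub>v \<theta>' = y"
    have "\<theta>' \<in> carrier_vec p" using a1 X by simp
    from main[OF this a2] show "objective w th \<le> objective w \<theta>'" by (rule conjunct1)
  qed
  moreover have "\<forall>\<theta>. is_solution X y w \<theta> \<longrightarrow> \<theta> = th"
  proof (intro allI impI)
    fix \<theta> assume "is_solution X y w \<theta>"
    then have T0: "\<theta> \<in> carrier_vec (dim_col X)" "X *\<^sub>v \<theta> = y" 
         "\<forall>\<theta>'\<in>carrier_vec (dim_col X). X *\<^sub>v \<theta>' = y \<longrightarrow> objective w \<theta> \<le> objective w \<theta>'"
      unfolding is_solution_def by blast+
    have "th \<in> carrier_vec (dim_col X)" using th X by simp
    then have o: "objective w \<theta> \<le> objective w th" using T0(3) Xth by blast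
    have T: "\<theta> \<in> carrier_vec p" "X *\<^sub>v \<theta> = y" using T0(1,2) X by auto
    then show "\<theta> = th" using main[OF T(1,2)] o by blast
  qed
  ultimately show ?thesis unfolding th_def by (rule conjI)
qed



lemma diag_mv:
  assumes M: "M \<in> carrier_mat r c" and v: "v \<in> carrier_vec c"
    and dg: "\<And>i j. i < r \<Longrightarrow> j < c \<Longrightarrow> i \<noteq> j \<Longrightarrow> M $$ (i,j) = 0" and i: "i < r"
  shows "(M *\<^sub>v v) $ i = (if i < c then M $$ (i,i) * v $ i else (0::real))"
proof -
  have "(M *\<^sub>v v) $ i = (\<Sum>j\<in>{0..<c}. M $$ (i,j) * v $ j)"
    using M v i by (simp add: scalar_prod_def)
  also have "\<dots> = (\<Sum>j\<in>{0..<c}. if j = i then M $$ (i,i) * v $ i else 0)"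
    using dg i by (intro sum.cong) auto
  also have "\<dots> = (if i < c then M $$ (i,i) * v $ i else 0)" by simp
  finally show ?thesis .
qed

lemma rank_inj:
  fixes X :: "real mat"
  assumes X: "X \<in> carrier_mat n p" and rk: "vec_space.rank n X = n"
    and v: "v \<in> carrier_vec n" and Xv: "transpose_mat X *\<^sub>v v = 0\<^sub>v p"
  shows "v = 0\<^sub>v n"
proof -
  interpret vec_space "TYPE(real)" n .
  obtain S where max: "maximal S (\<lambda>T. T \<subseteq> set (cols X) \<and> lin_indpt T)"
    using maximal_exists[of "(\<lambda>T. T \<subseteq> set (cols X) \<and> lin_indpt T)" "card (set (cols X))" "{}"]
    by (meson List.finite_set card_mono empty_iff empty_subsetI finite_lin_indpt2 rev_finite_subset)
  have cS: "card S = n" using rank_card_indpt[OF X max] rk by simp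
  have SX: "S \<subseteq> set (cols X)" and li: "lin_indpt S" using max unfolding maximal_def by auto
  have fS: "finite S" using SX finite_subset by blast
  obtain xs where xs: "set xs = S" "distinct xs" using finite_distinct_list[OF fS] by blast
  have lxs: "length xs = n" using xs cS distinct_card by fastforce
  have Sc: "set xs \<subseteq> carrier_vec n" using xs SX cols_dim X by fastforce
  define A where "A = mat_of_cols n xs"
  have A: "A \<in> carrier_mat n n" unfolding A_def using lxs by (metis mat_of_cols_carrier(1))
  have cA: "cols A = xs" unfolding A_def using Sc by simp
  have "rank A = n" using lin_indpt_full_rank[OF A] cA xs li by simp
  then have dA: "det A \<noteq> 0" using det_rank_iff[OF A] by simp
  have At: "transpose_mat A \<in> carrier_mat n n" using A by simp
  have dAt: "det (transpose_mat A) \<noteq> 0" using dA det_transpose[OF A] by simp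
  have "transpose_mat A *\<^sub>v v = 0\<^sub>v n"
  proof (rule eq_vecI)
    show "dim_vec (transpose_mat A *\<^sub>v v) = dim_vec (0\<^sub>v n)" using A by simp
    fix j assume "j < dim_vec (0\<^sub>v n)"
    then have j: "j < n" by simp
    have "xs ! j \<in> set (cols X)" using j lxs xs SX by auto
    then obtain k where k: "k < p" "xs ! j = col X k" using X
      by (metis cols_length cols_nth in_set_conv_nth carrier_matD(2))
    have "(transpose_mat A *\<^sub>v v) $ j = col A j \<bullet> v" using A j by simp
    also have "col A j = xs ! j" unfolding A_def using j lxs Sc by (simp add: subset_code(1))
    also have "xs ! j = col X k" by (rule k(2))
    also have "col X k \<bullet> v = (transpose_mat X *\<^sub>v v) $ k" using X k by simp
    also have "\<dots> = 0" using Xv k by simp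
    finally show "(transpose_mat A *\<^sub>v v) $ j = 0\<^sub>v n $ j" using k j by simp
  qed
  then show ?thesis using det_0_iff_vec_prod_zero_field[OF At] dAt v by auto
qed



lemma mat_vec_zero: "A \<in> carrier_mat r c \<Longrightarrow> A *\<^sub>v 0\<^sub>v c = (0\<^sub>v r :: real vec)"
  by (intro eq_vecI) (auto simp: scalar_prod_def)

lemma inv_apply:
  assumes A: "A \<in> carrier_mat r m" and B: "B \<in> carrier_mat m r" and AB: "A * B = 1\<^sub>m r"
    and x: "(x :: real vec) \<in> carrier_vec r"
  shows "A *\<^sub>v (B *\<^sub>v x) = x"
proof -
  have "A *\<^sub>v (B *\<^sub>v x) = (A * B) *\<^sub>v x" using A B x by simp
  then show ?thesis using AB x by simp
qed

lemma normV:
  assumes V: "V \<in> carrier_mat p p" and VtV: "transpose_mat V * V = 1\<^sub>m p" and x: "(x::real vec) \<in> carrier_vec p"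
  shows "vnorm (V *\<^sub>v x) = vnorm x"
proof -
  have Vx: "V *\<^sub>v x \<in> carrier_vec p" using V x by simp
  have "(V *\<^sub>v x) \<bullet> (V *\<^sub>v x) = (transpose_mat V *\<^sub>v (V *\<^sub>v x)) \<bullet> x"
    using transpose_vec_mult_scalar[OF V x Vx] by simp
  also have "\<dots> = x \<bullet> x" using inv_apply[OF _ V VtV x] V by simp
  finally show ?thesis unfolding vnorm_def by simp
qed

theorem mainTheorem4:
  fixes n p :: nat and X U D V :: "real mat" and y w :: "real vec"
  assumes "p > n"
    and "X \<in> carrier_mat n p"
    and "vec_space.rank n X = n"
    and "orthonormal_mat n U" and "orthonormal_mat p V"
    and "D \<in> carrier_mat n p" and "rect_diag_desc D"
    and "X = U * D * transpose_mat V"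
    and "y \<in> carrier_vec n" and "w \<in> carrier_vec p"
  shows "let ytil = diag_pinv D *\<^sub>v (transpose_mat U *\<^sub>v y);
             wtil = transpose_mat V *\<^sub>v w;
             a = vnorm (tail_vec n wtil); b = vnorm ytil;
             alpha = sqrt ((8 * a ^ 2 + sqrt (64 * a ^ 4 + 1296 * b ^ 2)) / 81);
             G = the (mat_inverse (X * transpose_mat X));
             thOLS = transpose_mat X *\<^sub>v (G *\<^sub>v y);
             th = thOLS + alpha \<cdot>\<^sub>v ((1\<^sub>m p - transpose_mat X * G * X) *\<^sub>v w)
         in is_solution X y w th \<and> (\<forall>\<theta>. is_solution X y w \<theta> \<longrightarrow> \<theta> = th)"
proof -
  note pn = assms(1) and X = assms(2) and rk = assms(3) and Dc = assms(6) and rd = assms(7)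
    and Xeq = assms(8) and y = assms(9) and w = assms(10)
  have U: "U \<in> carrier_mat n n" and UtU: "transpose_mat U * U = 1\<^sub>m n" and UUt: "U * transpose_mat U = 1\<^sub>m n"
    using assms(4) unfolding orthonormal_mat_def by auto
  have V: "V \<in> carrier_mat p p" and VtV: "transpose_mat V * V = 1\<^sub>m p" and VVt: "V * transpose_mat V = 1\<^sub>m p"
    using assms(5) unfolding orthonormal_mat_def by auto
  have Ut: "transpose_mat U \<in> carrier_mat n n" and Vt: "transpose_mat V \<in> carrier_mat p p"
    and Dt: "transpose_mat D \<in> carrier_mat p n" and Xt: "transpose_mat X \<in> carrier_mat p n"
    using U V Dc X by auto
  define \<sigma> where "\<sigma> i = D $$ (i,i)" for i
  have Ddg: "\<And>i j. i < n \<Longrightarrow> j < p \<Longrightarrow> i \<noteq> j \<Longrightarrow> D $$ (i,j) = 0"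
    using rd Dc unfolding rect_diag_desc_def by auto
  have sg0: "\<And>i. i < n \<Longrightarrow> \<sigma> i \<ge> 0" using rd Dc pn unfolding rect_diag_desc_def \<sigma>_def by auto
  have UtUv: "\<And>x. x \<in> carrier_vec n \<Longrightarrow> transpose_mat U *\<^sub>v (U *\<^sub>v x) = x"
    using inv_apply[OF Ut U UtU] .
  have UUtv: "\<And>x. x \<in> carrier_vec n \<Longrightarrow> U *\<^sub>v (transpose_mat U *\<^sub>v x) = x"
    using inv_apply[OF U Ut UUt] .
  have VtVv: "\<And>x. x \<in> carrier_vec p \<Longrightarrow> transpose_mat V *\<^sub>v (V *\<^sub>v x) = x"
    using inv_apply[OF Vt V VtV] .
  have VVtv: "\<And>x. x \<in> carrier_vec p \<Longrightarrow> V *\<^sub>v (transpose_mat V *\<^sub>v x) = x"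
    using inv_apply[OF V Vt VVt] .
  have Xv: "\<And>x. x \<in> carrier_vec p \<Longrightarrow> X *\<^sub>v x = U *\<^sub>v (D *\<^sub>v (transpose_mat V *\<^sub>v x))"
  proof -
    fix x :: "real vec" assume x: "x \<in> carrier_vec p"
    have "X *\<^sub>v x = (U * D) *\<^sub>v (transpose_mat V *\<^sub>v x)" unfolding Xeq
      using U Dc Vt x by (subst assoc_mult_mat_vec[of _ n p _ p]) auto
    also have "\<dots> = U *\<^sub>v (D *\<^sub>v (transpose_mat V *\<^sub>v x))" using U Dc Vt x by simp
    finally show "X *\<^sub>v x = U *\<^sub>v (D *\<^sub>v (transpose_mat V *\<^sub>v x))" .
  qed
  have XT: "transpose_mat X = V * (transpose_mat D * transpose_mat U)"
  proof -
    have "transpose_mat X = transpose_mat (transpose_mat V) * transpose_mat (U * D)"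
      unfolding Xeq by (rule transpose_mult[OF mult_carrier_mat[OF U Dc] Vt])
    also have "transpose_mat (U * D) = transpose_mat D * transpose_mat U"
      by (rule transpose_mult[OF U Dc])
    finally show ?thesis by simp
  qed
  have XTv: "\<And>x. x \<in> carrier_vec n \<Longrightarrow> transpose_mat X *\<^sub>v x = V *\<^sub>v (transpose_mat D *\<^sub>v (transpose_mat U *\<^sub>v x))"
  proof -
    fix x :: "real vec" assume x: "x \<in> carrier_vec n"
    have "(V * (transpose_mat D * transpose_mat U)) *\<^sub>v x = V *\<^sub>v ((transpose_mat D * transpose_mat U) *\<^sub>v x)"
      using V Dt Ut x by (intro assoc_mult_mat_vec) auto
    also have "(transpose_mat D * transpose_mat U) *\<^sub>v x = transpose_mat D *\<^sub>v (transpose_mat U *\<^sub>v x)"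
      using Dt Ut x by (intro assoc_mult_mat_vec) auto
    finally show "transpose_mat X *\<^sub>v x = V *\<^sub>v (transpose_mat D *\<^sub>v (transpose_mat U *\<^sub>v x))" unfolding XT .
  qed
  have Dmv: "\<And>x i. x \<in> carrier_vec p \<Longrightarrow> i < n \<Longrightarrow> (D *\<^sub>v x) $ i = \<sigma> i * x $ i"
    using diag_mv[OF Dc _ Ddg] pn unfolding \<sigma>_def by auto
  have DTmv: "\<And>x i. x \<in> carrier_vec n \<Longrightarrow> i < p \<Longrightarrow> (transpose_mat D *\<^sub>v x) $ i = (if i < n then \<sigma> i * x $ i else 0)"
  proof -
    fix x :: "real vec" and i assume x: "x \<in> carrier_vec n" and i: "i < p"
    have dg: "\<And>i j. i < p \<Longrightarrow> j < n \<Longrightarrow> i \<noteq> j \<Longrightarrow> transpose_mat D $$ (i,j) = 0"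
      using Ddg Dc by auto
    show "(transpose_mat D *\<^sub>v x) $ i = (if i < n then \<sigma> i * x $ i else 0)"
      using diag_mv[OF Dt x dg i] Dc i unfolding \<sigma>_def by auto
  qed
  define Dp where "Dp = diag_pinv D"
  have Dpc: "Dp \<in> carrier_mat p n" unfolding Dp_def diag_pinv_def using Dc by auto
  have Dpmv: "\<And>x i. x \<in> carrier_vec n \<Longrightarrow> i < p \<Longrightarrow> (Dp *\<^sub>v x) $ i = (if i < n then inverse (\<sigma> i) * x $ i else 0)"
  proof -
    fix x :: "real vec" and i assume x: "x \<in> carrier_vec n" and i: "i < p"
    have dg: "\<And>i j. i < p \<Longrightarrow> j < n \<Longrightarrow> i \<noteq> j \<Longrightarrow> Dp $$ (i,j) = 0"
      using Dc unfolding Dp_def diag_pinv_def by auto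
    show "(Dp *\<^sub>v x) $ i = (if i < n then inverse (\<sigma> i) * x $ i else 0)"
      using diag_mv[OF Dpc x dg i] Dc i pn unfolding \<sigma>_def Dp_def diag_pinv_def by auto
  qed
  have sgp: "\<And>k. k < n \<Longrightarrow> \<sigma> k > 0"
  proof (rule ccontr)
    fix k assume k: "k < n" and "\<not> \<sigma> k > 0"
    then have s0: "\<sigma> k = 0" using sg0[OF k] by simp
    define e :: "real vec" where "e = unit_vec n k"
    have e: "e \<in> carrier_vec n" unfolding e_def by simp
    have De: "transpose_mat D *\<^sub>v e = 0\<^sub>v p"
    proof (rule eq_vecI)
      fix i assume "i < dim_vec (0\<^sub>v p)"
      then have i: "i < p" by simp
      show "(transpose_mat D *\<^sub>v e) $ i = 0\<^sub>v p $ i"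
        unfolding DTmv[OF e i] using i s0 k unfolding e_def by auto
    qed (use Dt in simp)
    have "transpose_mat X *\<^sub>v (U *\<^sub>v e) = 0\<^sub>v p"
      using XTv[of "U *\<^sub>v e"] U e UtUv[OF e] De V mat_vec_zero[OF V] by simp
    then have "U *\<^sub>v e = 0\<^sub>v n" using rank_inj[OF X rk] U e by simp
    then have "e = 0\<^sub>v n" using UtUv[OF e] mat_vec_zero[OF Ut] by simp
    then have "e $ k = 0" using k by simp
    then show False unfolding e_def using k by simp
  qed
  define XX where "XX = X * transpose_mat X"
  have XXc: "XX \<in> carrier_mat n n" unfolding XX_def using X Xt by simp
  have XXv: "\<And>x. x \<in> carrier_vec n \<Longrightarrow> XX *\<^sub>v x = X *\<^sub>v (transpose_mat X *\<^sub>v x)"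
    unfolding XX_def using X Xt by simp
  have "det XX \<noteq> 0"
  proof
    assume "det XX = 0"
    then obtain v where v: "v \<in> carrier_vec n" "v \<noteq> 0\<^sub>v n" "XX *\<^sub>v v = 0\<^sub>v n"
      using det_0_iff_vec_prod_zero_field[OF XXc] by blast
    have "(transpose_mat X *\<^sub>v v) \<bullet> (transpose_mat X *\<^sub>v v) = v \<bullet> (X *\<^sub>v (transpose_mat X *\<^sub>v v))"
      using transpose_vec_mult_scalar[OF X _ v(1), of "transpose_mat X *\<^sub>v v"] Xt v(1) by simp
    also have "\<dots> = v \<bullet> 0\<^sub>v n" using XXv[OF v(1)] v(3) by simp
    also have "\<dots> = 0" using v(1) by (simp add: scalar_prod_def)
    finally have "transpose_mat X *\<^sub>v v = 0\<^sub>v p" using sp_self_0[of "transpose_mat X *\<^sub>v v" p] Xt v(1) by simp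
    then have "v = 0\<^sub>v n" using rank_inj[OF X rk v(1)] by simp
    then show False using v(2) by simp
  qed
  note un = det_non_zero_imp_unit[OF XXc this, of "()"]
  obtain G where mi: "mat_inverse XX = Some G"
  proof (cases "mat_inverse XX")
    case None
    from mat_inverse(1)[OF XXc None, of "()"] un show ?thesis by simp
  qed auto
  have XXG: "XX * G = 1\<^sub>m n" and GXX: "G * XX = 1\<^sub>m n" and Gc: "G \<in> carrier_mat n n"
    using mat_inverse(2)[OF XXc mi] by auto
  have Gsolve: "\<And>g b. g \<in> carrier_vec n \<Longrightarrow> XX *\<^sub>v g = b \<Longrightarrow> G *\<^sub>v b = g"
    using inv_apply[OF Gc XXc GXX] by blast
  have theG: "the (mat_inverse (X * transpose_mat X)) = G" using mi unfolding XX_def by simp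
  define c where "c = transpose_mat U *\<^sub>v y"
  have cc: "c \<in> carrier_vec n" unfolding c_def using Ut y by simp
  define e1 :: "real vec" where "e1 = vec n (\<lambda>i. c $ i / (\<sigma> i)^2)"
  have e1: "e1 \<in> carrier_vec n" unfolding e1_def by simp
  define t1 where "t1 = V *\<^sub>v (Dp *\<^sub>v c)"
  have t1: "t1 \<in> carrier_vec p" unfolding t1_def using V Dpc cc by simp
  have DTe1: "transpose_mat D *\<^sub>v e1 = Dp *\<^sub>v c"
  proof (rule eq_vecI)
    fix i assume "i < dim_vec (Dp *\<^sub>v c)"
    then have i: "i < p" using Dpc by simp
    show "(transpose_mat D *\<^sub>v e1) $ i = (Dp *\<^sub>v c) $ i"
      unfolding DTmv[OF e1 i] Dpmv[OF cc i] using sgp[of i] unfolding e1_def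
      by (auto simp: power2_eq_square field_simps)
  qed (use Dt Dpc in simp)
  have DDp: "D *\<^sub>v (Dp *\<^sub>v c) = c"
  proof (rule eq_vecI)
    fix i assume "i < dim_vec c"
    then have i: "i < n" using cc by simp
    have ip: "i < p" using i pn by simp
    show "(D *\<^sub>v (Dp *\<^sub>v c)) $ i = c $ i"
      unfolding Dmv[OF mult_mat_vec_carrier[OF Dpc cc] i] Dpmv[OF cc ip] using sgp[OF i] i by simp
  qed (use Dc cc in simp)
  have XTg: "transpose_mat X *\<^sub>v (U *\<^sub>v e1) = t1"
    unfolding XTv[OF mult_mat_vec_carrier[OF U e1]] UtUv[OF e1] DTe1 t1_def ..
  have Xt1: "X *\<^sub>v t1 = y"
    unfolding Xv[OF t1] unfolding t1_def unfolding VtVv[OF mult_mat_vec_carrier[OF Dpc cc]]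
    unfolding DDp unfolding c_def unfolding UUtv[OF y] ..
  have Gy: "G *\<^sub>v y = U *\<^sub>v e1"
    by (rule Gsolve) (use U e1 XTg Xt1 XXv in simp_all)
  have thOLS: "transpose_mat X *\<^sub>v (G *\<^sub>v y) = t1" unfolding Gy XTg ..
  have nt1: "vnorm t1 = vnorm (Dp *\<^sub>v c)"
  proof -
    have dc: "Dp *\<^sub>v c \<in> carrier_vec p" using Dpc cc by simp
    have "t1 \<bullet> t1 = (transpose_mat V *\<^sub>v t1) \<bullet> (Dp *\<^sub>v c)"
      using transpose_vec_mult_scalar[OF V dc t1] unfolding t1_def by simp
    also have "\<dots> = (Dp *\<^sub>v c) \<bullet> (Dp *\<^sub>v c)" unfolding t1_def VtVv[OF dc] ..
    finally show ?thesis unfolding vnorm_def by simp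
  qed
  define q where "q = transpose_mat V *\<^sub>v w"
  have qc: "q \<in> carrier_vec p" unfolding q_def using Vt w by simp
  define hq :: "real vec" where "hq = vec p (\<lambda>i. if i < n then q $ i else 0)"
  have hqc: "hq \<in> carrier_vec p" unfolding hq_def by simp
  define e2 :: "real vec" where "e2 = vec n (\<lambda>i. (D *\<^sub>v q) $ i / (\<sigma> i)^2)"
  have e2: "e2 \<in> carrier_vec n" unfolding e2_def by simp
  have tlc: "tail_vec n q \<in> carrier_vec p" unfolding tail_vec_def using qc by simp
  have DTe2: "transpose_mat D *\<^sub>v e2 = hq"
  proof (rule eq_vecI)
    fix i assume "i < dim_vec hq"
    then have i: "i < p" using hqc by simp
    show "(transpose_mat D *\<^sub>v e2) $ i = hq $ i"
    proof (cases "i < n")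
      case True
      then show ?thesis unfolding DTmv[OF e2 i] using sgp[OF True] i Dmv[OF qc True] unfolding e2_def hq_def
        by (simp add: power2_eq_square field_simps)
    next
      case False
      then show ?thesis unfolding DTmv[OF e2 i] using i unfolding hq_def by simp
    qed
  qed (use Dt hqc in simp)
  have Dhq: "D *\<^sub>v hq = D *\<^sub>v q"
  proof (rule eq_vecI)
    fix i assume "i < dim_vec (D *\<^sub>v q)"
    then have i: "i < n" using Dc by simp
    show "(D *\<^sub>v hq) $ i = (D *\<^sub>v q) $ i"
      unfolding Dmv[OF hqc i] Dmv[OF qc i] using i pn unfolding hq_def by simp
  qed (use Dc in simp)
  have Dtl: "D *\<^sub>v tail_vec n q = 0\<^sub>v n"
  proof (rule eq_vecI)
    fix i assume "i < dim_vec (0\<^sub>v n)"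
    then have i: "i < n" by simp
    show "(D *\<^sub>v tail_vec n q) $ i = 0\<^sub>v n $ i"
      unfolding Dmv[OF tlc i] using i pn qc unfolding tail_vec_def by simp
  qed (use Dc in simp)
  have XTh: "transpose_mat X *\<^sub>v (U *\<^sub>v e2) = V *\<^sub>v hq"
    unfolding XTv[OF mult_mat_vec_carrier[OF U e2]] UtUv[OF e2] DTe2 ..
  have XVhq: "X *\<^sub>v (V *\<^sub>v hq) = X *\<^sub>v w"
    unfolding Xv[OF mult_mat_vec_carrier[OF V hqc]] Xv[OF w] unfolding VtVv[OF hqc] Dhq q_def ..
  have Gx: "G *\<^sub>v (X *\<^sub>v w) = U *\<^sub>v e2"
    by (rule Gsolve) (use U e2 XTh XVhq XXv in simp_all)
  have GXc: "transpose_mat X * G \<in> carrier_mat p n" using Xt Gc by simp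
  have Mw: "(transpose_mat X * G * X) *\<^sub>v w = transpose_mat X *\<^sub>v (G *\<^sub>v (X *\<^sub>v w))"
  proof -
    have "(transpose_mat X * G * X) *\<^sub>v w = (transpose_mat X * G) *\<^sub>v (X *\<^sub>v w)"
      by (rule assoc_mult_mat_vec[OF GXc X w])
    also have "\<dots> = transpose_mat X *\<^sub>v (G *\<^sub>v (X *\<^sub>v w))"
      by (rule assoc_mult_mat_vec[OF Xt Gc]) (use X w in simp)
    finally show ?thesis .
  qed
  define u where "u = (1\<^sub>m p - transpose_mat X * G * X) *\<^sub>v w"
  have Mc: "transpose_mat X * G * X \<in> carrier_mat p p" using GXc X by simp
  have uw: "u = w - transpose_mat X *\<^sub>v (G *\<^sub>v (X *\<^sub>v w))"
    unfolding u_def Mw[symmetric] using minus_mult_distrib_mat_vec[OF one_carrier_mat Mc w] w by simp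
  have tl: "tail_vec n q = q - hq"
    by (rule eq_vecI) (use qc in \<open>auto simp: tail_vec_def hq_def\<close>)
  have uV: "u = V *\<^sub>v tail_vec n q"
  proof -
    have "V *\<^sub>v tail_vec n q = V *\<^sub>v q - V *\<^sub>v hq" unfolding tl
      by (rule mult_minus_distrib_mat_vec[OF V qc hqc])
    also have "V *\<^sub>v q = w" unfolding q_def by (rule VVtv[OF w])
    finally show ?thesis unfolding uw Mw Gx XTh by simp
  qed
  have uc: "u \<in> carrier_vec p" unfolding uV using V tlc by simp
  have Xu: "X *\<^sub>v u = 0\<^sub>v n"
    unfolding uV Xv[OF mult_mat_vec_carrier[OF V tlc]] unfolding VtVv[OF tlc] Dtl using mat_vec_zero[OF U] .
  have na: "vnorm (tail_vec n (transpose_mat V *\<^sub>v w)) = vnorm u"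
  proof -
    have "vnorm u = vnorm (tail_vec n q)" unfolding uV by (rule normV[OF V VtV tlc])
    then show ?thesis unfolding q_def by simp
  qed
  have nb: "vnorm (diag_pinv D *\<^sub>v (transpose_mat U *\<^sub>v y)) = vnorm (transpose_mat X *\<^sub>v (G *\<^sub>v y))"
    unfolding thOLS nt1 Dp_def c_def ..
  have t0c: "transpose_mat X *\<^sub>v (G *\<^sub>v y) \<in> carrier_vec p" unfolding thOLS by (rule t1)
  have Xt0: "X *\<^sub>v (transpose_mat X *\<^sub>v (G *\<^sub>v y)) = y" unfolding thOLS by (rule Xt1)
  have orth: "(transpose_mat X *\<^sub>v (G *\<^sub>v y)) \<bullet> z = 0 \<and> w \<bullet> z = u \<bullet> z"
    if z: "z \<in> carrier_vec p" and Xz: "X *\<^sub>v z = 0\<^sub>v n" for z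
  proof
    have Gyc: "G *\<^sub>v y \<in> carrier_vec n" using Gc y by simp
    have "(transpose_mat X *\<^sub>v (G *\<^sub>v y)) \<bullet> z = (G *\<^sub>v y) \<bullet> (X *\<^sub>v z)"
      by (rule transpose_vec_mult_scalar[OF X z Gyc])
    also have "\<dots> = 0" unfolding Xz using Gyc by (simp add: scalar_prod_def)
    finally show "(transpose_mat X *\<^sub>v (G *\<^sub>v y)) \<bullet> z = 0" .
    have Gxc: "G *\<^sub>v (X *\<^sub>v w) \<in> carrier_vec n" using Gc X w by simp
    have "(transpose_mat X *\<^sub>v (G *\<^sub>v (X *\<^sub>v w))) \<bullet> z = (G *\<^sub>v (X *\<^sub>v w)) \<bullet> (X *\<^sub>v z)"
      by (rule transpose_vec_mult_scalar[OF X z Gxc])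
    also have "\<dots> = 0" unfolding Xz using Gxc by (simp add: scalar_prod_def)
    finally have h: "(transpose_mat X *\<^sub>v (G *\<^sub>v (X *\<^sub>v w))) \<bullet> z = 0" .
    have "u \<bullet> z = w \<bullet> z - (transpose_mat X *\<^sub>v (G *\<^sub>v (X *\<^sub>v w))) \<bullet> z"
      unfolding uw by (rule minus_scalar_prod_distrib[OF w _ z]) (use Xt Gxc in simp)
    then show "w \<bullet> z = u \<bullet> z" using h by simp
  qed
  note C = core[OF X t0c uc w Xt0 Xu orth na nb refl]
  show ?thesis unfolding Let_def theG using C unfolding u_def .
qed


end
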